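(* Let $m\ge1$, $n>1$ be integers and $1\le l<(n-1)/2$. If $(x,y,z)\in\mathbb{C}^3$ satisfies $v(x,y,z)=2\cos\frac{2l\pi}{n-1}$ and $S_m(z)-vS_{m-1}(z)=0$, then $v=2\cos\frac{2l\pi}{n-1}\in\mathbb{R}$ and $$z=-v^3+v^2xy-v(x^2+y^2-3)+xy.$$ Hence the set of such points contains no point of the form $(2,2,z)$ with $z\notin\mathbb{R}$.
   Context: $S_k(q)$ are the Chebyshev polynomials defined for all integers $k$ by $S_0=1$, $S_1=q$, $S_{k+1}=qS_k-S_{k-1}$. Here $v(x,y,z)=\big(xS_m(z)-yS_{m-1}(z)\big)\big(yS_m(z)-xS_{m-1}(z)\big)-z\big(S_m^2(z)+S_{m-1}^2(z)\big)+4S_m(z)S_{m-1}(z)$. *)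

theory Defs
  imports Complex_Main
begin

fun chebS_nat :: "nat \<Rightarrow> complex \<Rightarrow> complex" where
  "chebS_nat 0 q = 1"
| "chebS_nat (Suc 0) q = q"
| "chebS_nat (Suc (Suc k)) q = q * chebS_nat (Suc k) q - chebS_nat k q"

text \<open>Extension to all integers by the same recurrence: S_{-1} = 0 and S_{-k} = - S_{k-2} for k >= 2.\<close>
definition chebS :: "int \<Rightarrow> complex \<Rightarrow> complex" where
  "chebS k q = (if 0 \<le> k then chebS_nat (nat k) q
                else if k = -1 then 0
                else - chebS_nat (nat (- k - 2)) q)"

definition vfun :: "int \<Rightarrow> complex \<Rightarrow> complex \<Rightarrow> complex \<Rightarrow> complex" where
  "vfun m x y z =
     (x * chebS m z - y * chebS (m - 1) z) * (y * chebS m z - x * chebS (m - 1) z)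
     - z * ((chebS m z)\<^sup>2 + (chebS (m - 1) z)\<^sup>2) + 4 * chebS m z * chebS (m - 1) z"

end

theory Submission
  imports Defs
begin

lemma cassini: "(chebS_nat (Suc k) q)^2 + (chebS_nat k q)^2 - q * chebS_nat (Suc k) q * chebS_nat k q = 1"
proof (induction k)
  case 0 then show ?case by (simp add: power2_eq_square)
next
  case (Suc k)
  then show ?case by (simp add: power2_eq_square algebra_simps)
qed

theorem lemma4p13:
  fixes m n l :: int and x y z :: complex
  assumes "m \<ge> 1" and "n > 1" and "1 \<le> l" and "real_of_int l < (real_of_int n - 1) / 2"
    and "vfun m x y z = complex_of_real (2 * cos (2 * real_of_int l * pi / (real_of_int n - 1)))"
    and "chebS m z - vfun m x y z * chebS (m - 1) z = 0"
  shows "vfun m x y z \<in> \<real>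
         \<and> z = - ((vfun m x y z)^3) + (vfun m x y z)^2 * x * y
               - vfun m x y z * (x^2 + y^2 - 3) + x * y
         \<and> (x = 2 \<and> y = 2 \<longrightarrow> z \<in> \<real>)"
proof -
  define v where "v = vfun m x y z"
  define a where "a = chebS m z"
  define b where "b = chebS (m - 1) z"
  have ha: "a = chebS_nat (Suc (nat (m-1))) z" unfolding a_def chebS_def using assms(1)
    by (simp add: Suc_nat_eq_nat_zadd1)
  have hb: "b = chebS_nat (nat (m-1)) z" unfolding b_def chebS_def using assms(1) by simp
  have cas: "a^2 + b^2 - z*a*b = 1" using cassini[of "nat (m-1)" z] ha hb by simp
  have av: "a = v * b" using assms(6) unfolding v_def a_def b_def by simp
  have vdef: "v = (x*a - y*b)*(y*a - x*b) - z*(a^2+b^2) + 4*a*b"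
    unfolding v_def a_def b_def vfun_def by simp
  have c2: "b^2 * (v^2 + 1 - z*v) = 1" using cas av by (simp add: power2_eq_square algebra_simps)
  hence bnz: "b^2 \<noteq> 0" by auto
  have "b^2 * (v*(v^2+1-z*v) - ((x*v-y)*(y*v-x) - z*(v^2+1) + 4*v)) = 0"
  proof -
    have "b^2 * (v*(v^2+1-z*v)) = v * (b^2 * (v^2 + 1 - z*v))" by (simp add: algebra_simps)
    also have "\<dots> = v" using c2 by simp
    finally have "b^2 * (v*(v^2+1-z*v)) = v" .
    moreover have "b^2 * ((x*v-y)*(y*v-x) - z*(v^2+1) + 4*v) = v"
      using vdef av by (simp add: power2_eq_square algebra_simps)
    ultimately show ?thesis by (simp add: right_diff_distrib)
  qed
  hence e: "v*(v^2+1-z*v) = (x*v-y)*(y*v-x) - z*(v^2+1) + 4*v" using bnz by simp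
  have zeq: "z = - (v^3) + v^2 * x * y - v * (x^2 + y^2 - 3) + x * y"
    using e by (simp add: power2_eq_square power3_eq_cube algebra_simps)
  have vr: "v \<in> \<real>" using assms(5) unfolding v_def by simp
  have "x = 2 \<and> y = 2 \<longrightarrow> z \<in> \<real>"
  proof
    assume "x = 2 \<and> y = 2"
    hence "z = - (v^3) + v^2 * 2 * 2 - v * (2^2 + 2^2 - 3) + 2 * 2" using zeq by simp
    thus "z \<in> \<real>" using vr by (simp add: Reals_diff Reals_add Reals_mult Reals_power Reals_minus)
  qed
  thus ?thesis using vr zeq unfolding v_def by simp
qed

end
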